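(* Consider a multi-unit auction with $2$ identical items and $2$ unknown single-minded bidders. Let $\mathcal M_1$ be the randomized mechanism that with probability $1/2$ runs a second-price (ascending) auction for the grand bundle of both items, and with probability $1/2$ allocates a single item to a uniformly random bidder and then runs a second-price (ascending) auction for the second item among both bidders. Then $\mathcal M_1$ achieves a $\frac{4}{3}$-approximation to the optimal social welfare: on every instance, its expected welfare under truthful play is at least $\frac{3}{4}\mathrm{OPT}$.
   Context: A single-minded bidder $i$ has private $x_i\ge0$ and demand $d_i\in\{1,2\}$ with $v_i(q)=x_i$ for $q\ge d_i$ and $0$ otherwise. In the auction for the second item, a bidder already holding one item bids her marginal value for the second item; the highest bidder wins. $\mathrm{OPT}$ is the maximum of $v_1(q_1)+v_2(q_2)$ over nonnegative integers with $q_1+q_2\le2$. *)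

theory Defs
  imports Complex_Main
begin

text \<open>Valuation of a single-minded bidder with value x and demand d for q items.\<close>
definition val :: "real \<Rightarrow> nat \<Rightarrow> nat \<Rightarrow> real" where
  "val x d q = (if d \<le> q then x else 0)"

definition OPT :: "real \<Rightarrow> nat \<Rightarrow> real \<Rightarrow> nat \<Rightarrow> real" where
  "OPT x1 d1 x2 d2 =
     Max ((\<lambda>(q1, q2). val x1 d1 q1 + val x2 d2 q2) ` {(q1, q2). q1 + q2 \<le> 2})"

text \<open>Second-price auction for the grand bundle: each bidder bids v_i(2); the highest
  bidder receives both items (ties to bidder 1; welfare is tie-independent).\<close>
definition bundle_welfare :: "real \<Rightarrow> nat \<Rightarrow> real \<Rightarrow> nat \<Rightarrow> real" where
  "bundle_welfare x1 d1 x2 d2 =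
     (if val x1 d1 2 \<ge> val x2 d2 2 then val x1 d1 2 + val x2 d2 0
      else val x1 d1 0 + val x2 d2 2)"

text \<open>Bidder h (value xh, demand dh) already holds one item; the other bidder o
  (value xo, demand do) holds none. Second-price auction for the second item:
  h bids her marginal value v_h(2) - v_h(1), o bids v_o(1); the highest bidder wins
  (ties to the holder; welfare is tie-independent).\<close>
definition second_item_welfare :: "real \<Rightarrow> nat \<Rightarrow> real \<Rightarrow> nat \<Rightarrow> real" where
  "second_item_welfare xh dh xo do =
     (if val xh dh 2 - val xh dh 1 \<ge> val xo do 1 - val xo do 0
      then val xh dh 2 + val xo do 0
      else val xh dh 1 + val xo do 1)"

definition M1_welfare :: "real \<Rightarrow> nat \<Rightarrow> real \<Rightarrow> nat \<Rightarrow> real" where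
  "M1_welfare x1 d1 x2 d2 =
     (1/2) * bundle_welfare x1 d1 x2 d2
     + (1/2) * ((1/2) * second_item_welfare x1 d1 x2 d2
              + (1/2) * second_item_welfare x2 d2 x1 d1)"

end

theory Submission
  imports Defs
begin

lemma pairs_eq: "{(q1, q2). q1 + q2 \<le> (2::nat)} = {(0,0),(0,1),(0,2),(1,0),(1,1),(2,0)}"
  by (auto simp: le_Suc_eq numeral_2_eq_2)

lemma OPT_explicit: "OPT x1 d1 x2 d2 = Max {val x1 d1 0 + val x2 d2 0, val x1 d1 0 + val x2 d2 1,
   val x1 d1 0 + val x2 d2 2, val x1 d1 1 + val x2 d2 0, val x1 d1 1 + val x2 d2 1, val x1 d1 2 + val x2 d2 0}"
  unfolding OPT_def pairs_eq by simp

theorem claimB2: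
  fixes x1 x2 :: real and d1 d2 :: nat
  assumes "x1 \<ge> 0" and "x2 \<ge> 0"
    and "d1 \<in> {1, 2}" and "d2 \<in> {1, 2}"
  shows "M1_welfare x1 d1 x2 d2 \<ge> (3/4) * OPT x1 d1 x2 d2"
  using assms
  unfolding OPT_explicit M1_welfare_def bundle_welfare_def second_item_welfare_def
  by (auto simp: val_def max_def)

end
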